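(* Let $L''$ be the Latin square of order $6$ $$L''=\begin{pmatrix} a&b&c&d&e&f\\ b&c&a&e&f&d\\ c&a&b&f&d&e\\ d&e&f&a&c&b\\ e&f&d&c&b&a\\ f&d&e&b&a&c \end{pmatrix}.$$ Let $L$ be any array obtained from $L''$ by replacing an arbitrary subset (possibly empty) of the occurrences of the symbol $d$ by a new symbol $g$. Then $L$ has no transversal.
   Context: An entry of an $n\times n$ array $A$ is a triple $(i,j,A_{ij})$. A transversal of an $n\times n$ array is a set of $n$ entries, no two agreeing in row, column, or symbol. Here $a,b,c,d,e,f,g$ are seven distinct symbols. *)

theory Defs
  imports Main
begin

definition entries :: "nat \<Rightarrow> (nat \<Rightarrow> nat \<Rightarrow> 'a) \<Rightarrow> (nat \<times> nat \<times> 'a) set" where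
  "entries n A = {(i, j, A i j) | i j. i < n \<and> j < n}"

definition transversal :: "nat \<Rightarrow> (nat \<Rightarrow> nat \<Rightarrow> 'a) \<Rightarrow> (nat \<times> nat \<times> 'a) set \<Rightarrow> bool" where
  "transversal n A T \<longleftrightarrow>
     T \<subseteq> entries n A \<and> card T = n \<and>
     (\<forall>x\<in>T. \<forall>y\<in>T. x \<noteq> y \<longrightarrow>
        fst x \<noteq> fst y \<and> fst (snd x) \<noteq> fst (snd y) \<and> snd (snd x) \<noteq> snd (snd y))"

definition Lpp :: "'a \<Rightarrow> 'a \<Rightarrow> 'a \<Rightarrow> 'a \<Rightarrow> 'a \<Rightarrow> 'a \<Rightarrow> nat \<Rightarrow> nat \<Rightarrow> 'a" where
  "Lpp a b c d e f i j =
     [[a,b,c,d,e,f],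
      [b,c,a,e,f,d],
      [c,a,b,f,d,e],
      [d,e,f,a,c,b],
      [e,f,d,c,b,a],
      [f,d,e,b,a,c]] ! i ! j"

end

theory Submission
  imports Defs
begin

lemma nat_less6: "(c::nat) < 6 \<Longrightarrow> (c = 0 \<Longrightarrow> P) \<Longrightarrow> (c = 1 \<Longrightarrow> P) \<Longrightarrow> (c = 2 \<Longrightarrow> P) \<Longrightarrow> (c = 3 \<Longrightarrow> P) \<Longrightarrow> (c = 4 \<Longrightarrow> P) \<Longrightarrow> (c = 5 \<Longrightarrow> P) \<Longrightarrow> P"
proof -
  assume "c < 6" then have "c = 0 \<or> c = 1 \<or> c = 2 \<or> c = 3 \<or> c = 4 \<or> c = 5" by linarith
  then show "(c = 0 \<Longrightarrow> P) \<Longrightarrow> (c = 1 \<Longrightarrow> P) \<Longrightarrow> (c = 2 \<Longrightarrow> P) \<Longrightarrow> (c = 3 \<Longrightarrow> P) \<Longrightarrow> (c = 4 \<Longrightarrow> P) \<Longrightarrow> (c = 5 \<Longrightarrow> P) \<Longrightarrow> P" by blast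
qed

lemma nn: "(0::nat) \<noteq> 1" "(0::nat) \<noteq> 2" "(0::nat) \<noteq> 3" "(0::nat) \<noteq> 4" "(0::nat) \<noteq> 5" "(1::nat) \<noteq> 0" "(1::nat) \<noteq> 2" "(1::nat) \<noteq> 3" "(1::nat) \<noteq> 4" "(1::nat) \<noteq> 5" "(2::nat) \<noteq> 0" "(2::nat) \<noteq> 1" "(2::nat) \<noteq> 3" "(2::nat) \<noteq> 4" "(2::nat) \<noteq> 5" "(3::nat) \<noteq> 0" "(3::nat) \<noteq> 1" "(3::nat) \<noteq> 2" "(3::nat) \<noteq> 4" "(3::nat) \<noteq> 5" "(4::nat) \<noteq> 0" "(4::nat) \<noteq> 1" "(4::nat) \<noteq> 2" "(4::nat) \<noteq> 3" "(4::nat) \<noteq> 5" "(5::nat) \<noteq> 0" "(5::nat) \<noteq> 1" "(5::nat) \<noteq> 2" "(5::nat) \<noteq> 3" "(5::nat) \<noteq> 4"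
  by simp_all
lemma comb:
  fixes a b c d e f g :: 'a and S :: "(nat \<times> nat) set" and L :: "nat \<Rightarrow> nat \<Rightarrow> 'a"
  assumes ne: "a \<noteq> b" "a \<noteq> c" "a \<noteq> d" "a \<noteq> e" "a \<noteq> f" "a \<noteq> g" "b \<noteq> a" "b \<noteq> c" "b \<noteq> d" "b \<noteq> e" "b \<noteq> f" "b \<noteq> g" "c \<noteq> a" "c \<noteq> b" "c \<noteq> d" "c \<noteq> e" "c \<noteq> f" "c \<noteq> g" "d \<noteq> a" "d \<noteq> b" "d \<noteq> c" "d \<noteq> e" "d \<noteq> f" "d \<noteq> g" "e \<noteq> a" "e \<noteq> b" "e \<noteq> c" "e \<noteq> d" "e \<noteq> f" "e \<noteq> g" "f \<noteq> a" "f \<noteq> b" "f \<noteq> c" "f \<noteq> d" "f \<noteq> e" "f \<noteq> g" "g \<noteq> a" "g \<noteq> b" "g \<noteq> c" "g \<noteq> d" "g \<noteq> e" "g \<noteq> f"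
  and Lv: "L 0 0 = a" "L 0 1 = b" "L 0 2 = c" "L 0 3 = (if (0,3) \<in> S then g else d)" "L 0 4 = e" "L 0 5 = f" "L 1 0 = b" "L 1 1 = c" "L 1 2 = a" "L 1 3 = e" "L 1 4 = f" "L 1 5 = (if (1,5) \<in> S then g else d)" "L 2 0 = c" "L 2 1 = a" "L 2 2 = b" "L 2 3 = f" "L 2 4 = (if (2,4) \<in> S then g else d)" "L 2 5 = e" "L 3 0 = (if (3,0) \<in> S then g else d)" "L 3 1 = e" "L 3 2 = f" "L 3 3 = a" "L 3 4 = c" "L 3 5 = b" "L 4 0 = e" "L 4 1 = f" "L 4 2 = (if (4,2) \<in> S then g else d)" "L 4 3 = c" "L 4 4 = b" "L 4 5 = a" "L 5 0 = f" "L 5 1 = (if (5,1) \<in> S then g else d)" "L 5 2 = e" "L 5 3 = b" "L 5 4 = a" "L 5 5 = c"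
  shows "c0 < 6 \<Longrightarrow> c1 < 6 \<Longrightarrow> c2 < 6 \<Longrightarrow> c3 < 6 \<Longrightarrow> c4 < 6 \<Longrightarrow> c5 < 6 \<Longrightarrow> c0 \<noteq> c1 \<Longrightarrow> c0 \<noteq> c2 \<Longrightarrow> c0 \<noteq> c3 \<Longrightarrow> c0 \<noteq> c4 \<Longrightarrow> c0 \<noteq> c5 \<Longrightarrow> c1 \<noteq> c2 \<Longrightarrow> c1 \<noteq> c3 \<Longrightarrow> c1 \<noteq> c4 \<Longrightarrow> c1 \<noteq> c5 \<Longrightarrow> c2 \<noteq> c3 \<Longrightarrow> c2 \<noteq> c4 \<Longrightarrow> c2 \<noteq> c5 \<Longrightarrow> c3 \<noteq> c4 \<Longrightarrow> c3 \<noteq> c5 \<Longrightarrow> c4 \<noteq> c5 \<Longrightarrow> L 0 c0 \<noteq> L 1 c1 \<Longrightarrow> L 0 c0 \<noteq> L 2 c2 \<Longrightarrow> L 0 c0 \<noteq> L 3 c3 \<Longrightarrow> L 0 c0 \<noteq> L 4 c4 \<Longrightarrow> L 0 c0 \<noteq> L 5 c5 \<Longrightarrow> L 1 c1 \<noteq> L 2 c2 \<Longrightarrow> L 1 c1 \<noteq> L 3 c3 \<Longrightarrow> L 1 c1 \<noteq> L 4 c4 \<Longrightarrow> L 1 c1 \<noteq> L 5 c5 \<Longrightarrow> L 2 c2 \<noteq> L 3 c3 \<Longrightarrow> L 2 c2 \<noteq> L 4 c4 \<Longrightarrow> L 2 c2 \<noteq> L 5 c5 \<Longrightarrow> L 3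 c3 \<noteq> L 4 c4 \<Longrightarrow> L 3 c3 \<noteq> L 5 c5 \<Longrightarrow> L 4 c4 \<noteq> L 5 c5 \<Longrightarrow> False"
  apply (erule nat_less6[where c=c0] ; (simp only: ne Lv nn simp_thms)? ; erule nat_less6[where c=c1] ; (simp only: ne Lv nn simp_thms)? ; erule nat_less6[where c=c2] ; (simp only: ne Lv nn simp_thms)? ; erule nat_less6[where c=c3] ; (simp only: ne Lv nn simp_thms)? ; erule nat_less6[where c=c4] ; (simp only: ne Lv nn simp_thms)? ; erule nat_less6[where c=c5] ; (simp only: ne Lv nn simp_thms)?)
  apply (simp_all only: ne Lv nn simp_thms split: if_split_asm)
  done

theorem mainTheorem15:
  fixes a b c d e f g :: 'a
    and S :: "(nat \<times> nat) set"
    and L :: "nat \<Rightarrow> nat \<Rightarrow> 'a"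
  assumes "distinct [a, b, c, d, e, f, g]"
    and "S \<subseteq> {(i, j). i < 6 \<and> j < 6 \<and> Lpp a b c d e f i j = d}"
    and "L = (\<lambda>i j. if (i, j) \<in> S then g else Lpp a b c d e f i j)"
  shows "\<not> (\<exists>T. transversal 6 L T)"
proof
  assume "\<exists>T. transversal 6 L T"
  then obtain T where tr: "transversal 6 L T" by blast
  have sub: "T \<subseteq> entries 6 L" and cT: "card T = 6"
    and dis: "\<And>x y. x \<in> T \<Longrightarrow> y \<in> T \<Longrightarrow> x \<noteq> y \<Longrightarrow>
        fst x \<noteq> fst y \<and> fst (snd x) \<noteq> fst (snd y) \<and> snd (snd x) \<noteq> snd (snd y)"
    using tr unfolding transversal_def by blast+
  have fin: "finite T" using cT by (metis card.infinite zero_neq_numeral)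
  have inj: "inj_on fst T" using dis by (meson inj_onI)
  have img: "fst ` T \<subseteq> {..<6}" using sub by (auto simp: entries_def)
  have "card (fst ` T) = 6" using inj cT by (simp add: card_image)
  hence imgeq: "fst ` T = {..<6}" using img by (simp add: card_subset_eq)
  define p where "p i = (SOME x. x \<in> T \<and> fst x = i)" for i
  have pT: "p i \<in> T \<and> fst (p i) = i" if "i < 6" for i
  proof -
    have "\<exists>x. x \<in> T \<and> fst x = i" using imgeq that by (metis image_iff lessThan_iff)
    thus ?thesis unfolding p_def by (rule someI_ex)
  qed
  define cc where "cc i = fst (snd (p i))" for i
  have pe: "p i = (i, cc i, L i (cc i)) \<and> cc i < 6" if "i < 6" for i
  proof -
    have "p i \<in> entries 6 L" using pT[OF that] sub by blast
    then show ?thesis using pT[OF that] unfolding cc_def entries_def by auto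
  qed
  have pr: "cc i \<noteq> cc j \<and> L i (cc i) \<noteq> L j (cc j)" if "i < 6" "j < 6" "i \<noteq> j" for i j
  proof -
    have "p i \<noteq> p j" using pT that by metis
    then have "fst (snd (p i)) \<noteq> fst (snd (p j)) \<and> snd (snd (p i)) \<noteq> snd (snd (p j))"
      using dis pT that by blast
    then show ?thesis using pe that by (metis snd_conv fst_conv)
  qed
  have ds: "a \<noteq> b" "a \<noteq> c" "a \<noteq> d" "a \<noteq> e" "a \<noteq> f" "a \<noteq> g"
     "b \<noteq> c" "b \<noteq> d" "b \<noteq> e" "b \<noteq> f" "b \<noteq> g" "c \<noteq> d" "c \<noteq> e" "c \<noteq> f" "c \<noteq> g"
     "d \<noteq> e" "d \<noteq> f" "d \<noteq> g" "e \<noteq> f" "e \<noteq> g" "f \<noteq> g"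
    using assms(1) by auto
  note ds2 = ds ds[symmetric]
  have Lv: "L 0 0 = a" "L 0 1 = b" "L 0 2 = c" "L 0 3 = (if (0,3) \<in> S then g else d)" "L 0 4 = e" "L 0 5 = f" "L 1 0 = b" "L 1 1 = c" "L 1 2 = a" "L 1 3 = e" "L 1 4 = f" "L 1 5 = (if (1,5) \<in> S then g else d)" "L 2 0 = c" "L 2 1 = a" "L 2 2 = b" "L 2 3 = f" "L 2 4 = (if (2,4) \<in> S then g else d)" "L 2 5 = e" "L 3 0 = (if (3,0) \<in> S then g else d)" "L 3 1 = e" "L 3 2 = f" "L 3 3 = a" "L 3 4 = c" "L 3 5 = b" "L 4 0 = e" "L 4 1 = f" "L 4 2 = (if (4,2) \<in> S then g else d)" "L 4 3 = c" "L 4 4 = b" "L 4 5 = a" "L 5 0 = f" "L 5 1 = (if (5,1) \<in> S then g else d)" "L 5 2 = e" "L 5 3 = b" "L 5 4 = a" "L 5 5 = c"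
    using assms(2,3) ds2 by (auto simp: Lpp_def)
  show False
    apply (rule comb[of a b c d e f g L S "cc 0" "cc 1" "cc 2" "cc 3" "cc 4" "cc 5"])
    using pe pr ds2 Lv by simp_all
qed

end
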